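(* Let $R$ be a D-regularly nil clean ring. Then its center $C(R)$ is again a D-regularly nil clean ring.
   Context: All rings are associative with identity $1\neq 0$. $C(R)$ denotes the center of $R$, $Id(R)$ the set of idempotents, $Nil(R)$ the set of nilpotent elements. A ring $R$ is called D-regularly nil clean if for each $a\in R$ there exists an idempotent $e\in aRa\cap Id(R)$ such that $a(1-e)\in Nil(R)$. *)

theory Defs
  imports "HOL-Algebra.Ring"
begin

definition Idems :: "('a, 'b) ring_scheme \<Rightarrow> 'a set" where
  "Idems A = {e \<in> carrier A. mult A e e = e}"

definition Nilps :: "('a, 'b) ring_scheme \<Rightarrow> 'a set" where
  "Nilps A = {x \<in> carrier A. \<exists>n::nat. pow A x n = zero A}"

definition D_regularly_nil_clean :: "('a, 'b) ring_scheme \<Rightarrow> bool" where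
  "D_regularly_nil_clean A \<longleftrightarrow>
     (\<forall>a \<in> carrier A. \<exists>e. e \<in> Idems A \<and>
        (\<exists>r \<in> carrier A. e = mult A (mult A a r) a) \<and>
        mult A a (a_minus A (one A) e) \<in> Nilps A)"

definition center :: "('a, 'b) ring_scheme \<Rightarrow> 'a set" where
  "center A = {z \<in> carrier A. \<forall>x \<in> carrier A. mult A z x = mult A x z}"

definition center_ring :: "('a, 'b) ring_scheme \<Rightarrow> ('a, 'b) ring_scheme" where
  "center_ring A = A\<lparr>carrier := center A\<rparr>"

end

theory Submission
  imports Defs "HOL-Algebra.Subrings"
begin

context ring
begin

lemma center_sub: "center R \<subseteq> carrier R" unfolding center_def by auto

lemma center_subring: "subring (center R) R"
proof (rule subringI)
  show "center R \<subseteq> carrier R" by (rule center_sub)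
  show "\<one> \<in> center R" unfolding center_def by auto
  fix h assume h: "h \<in> center R"
  then have hc: "h \<in> carrier R" and hx: "\<And>x. x \<in> carrier R \<Longrightarrow> h \<otimes> x = x \<otimes> h"
    unfolding center_def by auto
  show "\<ominus> h \<in> center R" unfolding center_def
  proof (intro CollectI conjI ballI)
    show "\<ominus> h \<in> carrier R" using hc by simp
    fix x assume xc: "x \<in> carrier R"
    show "\<ominus> h \<otimes> x = x \<otimes> \<ominus> h" using hc xc hx[OF xc] by (simp add: l_minus r_minus)
  qed
  fix h1 h2 assume h1: "h1 \<in> center R" and h2: "h2 \<in> center R"
  then have c: "h1 \<in> carrier R" "h2 \<in> carrier R"
    and x1: "\<And>x. x \<in> carrier R \<Longrightarrow> h1 \<otimes> x = x \<otimes> h1"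
    and x2: "\<And>x. x \<in> carrier R \<Longrightarrow> h2 \<otimes> x = x \<otimes> h2"
    unfolding center_def by auto
  have m: "h1 \<otimes> h2 \<in> carrier R" using c by simp
  show "h1 \<otimes> h2 \<in> center R" unfolding center_def
  proof (intro CollectI conjI ballI m)
    fix x assume xc: "x \<in> carrier R"
    have "h1 \<otimes> h2 \<otimes> x = h1 \<otimes> (x \<otimes> h2)" using c xc x2[OF xc] by (simp add: m_assoc)
    also have "\<dots> = x \<otimes> h1 \<otimes> h2" using c xc x1[OF xc] by (simp add: m_assoc[symmetric])
    finally show "h1 \<otimes> h2 \<otimes> x = x \<otimes> (h1 \<otimes> h2)" using c xc by (simp add: m_assoc)
  qed
  have p: "h1 \<oplus> h2 \<in> carrier R" using c by simp
  show "h1 \<oplus> h2 \<in> center R" unfolding center_def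
  proof (intro CollectI conjI ballI p)
    fix x assume xc: "x \<in> carrier R"
    show "(h1 \<oplus> h2) \<otimes> x = x \<otimes> (h1 \<oplus> h2)"
      using c xc x1[OF xc] x2[OF xc] by (simp add: l_distr r_distr)
  qed
qed

lemma center_pow: "a \<in> center R \<Longrightarrow> a [^] (k::nat) \<in> center R"
proof (induction k)
  case 0 then show ?case using subringE(3)[OF center_subring] by simp
next
  case (Suc k) then show ?case using subringE(6)[OF center_subring] by simp
qed

end

lemma central_comm: "a \<in> center R \<Longrightarrow> x \<in> carrier R \<Longrightarrow> a \<otimes>\<^bsub>R\<^esub> x = x \<otimes>\<^bsub>R\<^esub> a"
  unfolding center_def by auto

lemma pow_center_ring: "pow (center_ring R) x (n::nat) = pow R x n"
  by (induction n) (simp_all add: center_ring_def)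

theorem proposition2p2:
  fixes R :: "('a, 'b) ring_scheme"
  assumes "ring R"
    and "\<one>\<^bsub>R\<^esub> \<noteq> \<zero>\<^bsub>R\<^esub>"
    and "D_regularly_nil_clean R"
  shows "ring (center_ring R) \<and> \<one>\<^bsub>center_ring R\<^esub> \<noteq> \<zero>\<^bsub>center_ring R\<^esub>
         \<and> D_regularly_nil_clean (center_ring R)"
proof -
  interpret R: ring R by fact
  have rC: "ring (center_ring R)" unfolding center_ring_def
    by (rule R.subring_is_ring[OF R.center_subring])
  interpret C: ring "center_ring R" by (rule rC)
  have cC: "carrier (center_ring R) = center R" by (simp add: center_ring_def)
  have mC: "mult (center_ring R) = mult R" by (simp add: center_ring_def)
  have oC: "one (center_ring R) = one R" by (simp add: center_ring_def)
  have zC: "zero (center_ring R) = zero R" by (simp add: center_ring_def)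
  have aC: "add (center_ring R) = add R" by (simp add: center_ring_def)
  have invC: "\<ominus>\<^bsub>center_ring R\<^esub> y = \<ominus>\<^bsub>R\<^esub> y" if y: "y \<in> center R" for y
  proof -
    have yc: "y \<in> carrier R" using y R.center_sub by auto
    have "\<ominus>\<^bsub>center_ring R\<^esub> y \<in> center R" using C.a_inv_closed y cC by auto
    hence ic: "\<ominus>\<^bsub>center_ring R\<^esub> y \<in> carrier R" using R.center_sub by auto
    have "y \<oplus>\<^bsub>center_ring R\<^esub> \<ominus>\<^bsub>center_ring R\<^esub> y = \<zero>\<^bsub>center_ring R\<^esub>"
      using C.r_neg y cC by auto
    hence "y \<oplus>\<^bsub>R\<^esub> \<ominus>\<^bsub>center_ring R\<^esub> y = \<zero>\<^bsub>R\<^esub>" using aC zC by simp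
    thus ?thesis using ic yc by (metis R.add.inv_equality R.add.m_comm)
  qed
  have minusC: "x \<ominus>\<^bsub>center_ring R\<^esub> y = x \<ominus>\<^bsub>R\<^esub> y" if "y \<in> center R" for x y
    using invC[OF that] aC by (simp add: a_minus_def)
  have D: "D_regularly_nil_clean (center_ring R)"
    unfolding D_regularly_nil_clean_def
  proof
    fix a assume "a \<in> carrier (center_ring R)"
    hence aZ: "a \<in> center R" using cC by simp
    hence ac: "a \<in> carrier R" using R.center_sub by auto
    have acom: "\<And>x. x \<in> carrier R \<Longrightarrow> a \<otimes>\<^bsub>R\<^esub> x = x \<otimes>\<^bsub>R\<^esub> a"
      by (rule central_comm[OF aZ])
    obtain e r where eI: "e \<in> Idems R" and rc: "r \<in> carrier R"
      and er: "e = a \<otimes>\<^bsub>R\<^esub> r \<otimes>\<^bsub>R\<^esub> a"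
      and nil: "a \<otimes>\<^bsub>R\<^esub> (\<one>\<^bsub>R\<^esub> \<ominus>\<^bsub>R\<^esub> e) \<in> Nilps R"
    proof -
      have "\<exists>e. e \<in> Idems R \<and>
        (\<exists>r \<in> carrier R. e = a \<otimes>\<^bsub>R\<^esub> r \<otimes>\<^bsub>R\<^esub> a) \<and>
        a \<otimes>\<^bsub>R\<^esub> (\<one>\<^bsub>R\<^esub> \<ominus>\<^bsub>R\<^esub> e) \<in> Nilps R"
        using assms(3) ac unfolding D_regularly_nil_clean_def by (rule bspec)
      then show ?thesis using that by blast
    qed
    have ec: "e \<in> carrier R" and ee: "e \<otimes>\<^bsub>R\<^esub> e = e" using eI unfolding Idems_def by auto
    obtain k::nat where k: "(a \<otimes>\<^bsub>R\<^esub> (\<one>\<^bsub>R\<^esub> \<ominus>\<^bsub>R\<^esub> e)) [^]\<^bsub>R\<^esub> k = \<zero>\<^bsub>R\<^esub>"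
      using nil unfolding Nilps_def by auto
    have fc: "\<one>\<^bsub>R\<^esub> \<ominus>\<^bsub>R\<^esub> e \<in> carrier R" using ec by simp
    have fpow: "(\<one>\<^bsub>R\<^esub> \<ominus>\<^bsub>R\<^esub> e) [^]\<^bsub>R\<^esub> Suc n = \<one>\<^bsub>R\<^esub> \<ominus>\<^bsub>R\<^esub> e" for n
    proof (induction n)
      case 0 then show ?case using fc by simp
    next
      case (Suc n)
      have "(\<one>\<^bsub>R\<^esub> \<ominus>\<^bsub>R\<^esub> e) \<otimes>\<^bsub>R\<^esub> (\<one>\<^bsub>R\<^esub> \<ominus>\<^bsub>R\<^esub> e) = \<one>\<^bsub>R\<^esub> \<ominus>\<^bsub>R\<^esub> e"
        using ec ee by (simp add: R.r_distr R.l_distr a_minus_def R.l_minus R.r_minus R.a_ac R.r_neg)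
      then show ?case using Suc fc by simp
    qed
    have k0: "k \<noteq> 0" proof assume "k = 0" then show False using k assms(2) by simp qed
    then obtain m where km: "k = Suc m" by (cases k) auto
    have akc: "a [^]\<^bsub>R\<^esub> k \<in> center R" using R.center_pow aZ by blast
    hence akcar: "a [^]\<^bsub>R\<^esub> k \<in> carrier R" using R.center_sub by auto
    have ak0: "a [^]\<^bsub>R\<^esub> k \<otimes>\<^bsub>R\<^esub> (\<one>\<^bsub>R\<^esub> \<ominus>\<^bsub>R\<^esub> e) = \<zero>\<^bsub>R\<^esub>"
      using k R.pow_mult_distrib[OF acom[OF fc] ac fc, of k] fpow[of m] km by simp
    have ak0': "(\<one>\<^bsub>R\<^esub> \<ominus>\<^bsub>R\<^esub> e) \<otimes>\<^bsub>R\<^esub> a [^]\<^bsub>R\<^esub> k = \<zero>\<^bsub>R\<^esub>"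
      using ak0 central_comm[OF akc fc] by simp
    have ear: "e = a \<otimes>\<^bsub>R\<^esub> a \<otimes>\<^bsub>R\<^esub> r"
      using er acom[OF rc] ac rc by (metis R.m_assoc)
    have powrep: "\<exists>t\<in>carrier R. e = a [^]\<^bsub>R\<^esub> j \<otimes>\<^bsub>R\<^esub> t" for j::nat
    proof (induction j)
      case 0 then show ?case using ec by (intro bexI[of _ e]) auto
    next
      case (Suc j)
      then obtain t where tc: "t \<in> carrier R" and et: "e = a [^]\<^bsub>R\<^esub> j \<otimes>\<^bsub>R\<^esub> t" by blast
      have ajc: "a [^]\<^bsub>R\<^esub> j \<in> center R" using R.center_pow aZ by blast
      hence ajcar: "a [^]\<^bsub>R\<^esub> j \<in> carrier R" using R.center_sub by auto
      have "e = e \<otimes>\<^bsub>R\<^esub> e" using ee by simp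
      also have "\<dots> = (a \<otimes>\<^bsub>R\<^esub> r \<otimes>\<^bsub>R\<^esub> a) \<otimes>\<^bsub>R\<^esub> (a [^]\<^bsub>R\<^esub> j \<otimes>\<^bsub>R\<^esub> t)"
        using er et by metis
      also have "\<dots> = (a [^]\<^bsub>R\<^esub> j \<otimes>\<^bsub>R\<^esub> (a \<otimes>\<^bsub>R\<^esub> r \<otimes>\<^bsub>R\<^esub> a)) \<otimes>\<^bsub>R\<^esub> t"
        using central_comm[OF ajc, of "a \<otimes>\<^bsub>R\<^esub> r \<otimes>\<^bsub>R\<^esub> a"] ac rc ajcar tc
        by (simp add: R.m_assoc)
      also have "\<dots> = a [^]\<^bsub>R\<^esub> Suc j \<otimes>\<^bsub>R\<^esub> (r \<otimes>\<^bsub>R\<^esub> a \<otimes>\<^bsub>R\<^esub> t)"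
        using ac rc ajcar tc by (simp add: R.m_assoc)
      finally show ?case using ac rc tc by blast
    qed
    obtain t where tc: "t \<in> carrier R" and et: "e = a [^]\<^bsub>R\<^esub> k \<otimes>\<^bsub>R\<^esub> t"
      using powrep by blast
    have eZ: "e \<in> center R" unfolding center_def
    proof (intro CollectI conjI ballI)
      show "e \<in> carrier R" by (rule ec)
      fix x assume xc: "x \<in> carrier R"
      have l: "e \<otimes>\<^bsub>R\<^esub> x \<otimes>\<^bsub>R\<^esub> (\<one>\<^bsub>R\<^esub> \<ominus>\<^bsub>R\<^esub> e) = \<zero>\<^bsub>R\<^esub>"
      proof -
        have "e \<otimes>\<^bsub>R\<^esub> x \<otimes>\<^bsub>R\<^esub> (\<one>\<^bsub>R\<^esub> \<ominus>\<^bsub>R\<^esub> e) = (t \<otimes>\<^bsub>R\<^esub> x) \<otimes>\<^bsub>R\<^esub> (a [^]\<^bsub>R\<^esub> k \<otimes>\<^bsub>R\<^esub> (\<one>\<^bsub>R\<^esub> \<ominus>\<^bsub>R\<^esub> e))"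
        proof -
          have "e \<otimes>\<^bsub>R\<^esub> x = a [^]\<^bsub>R\<^esub> k \<otimes>\<^bsub>R\<^esub> (t \<otimes>\<^bsub>R\<^esub> x)"
            using tc xc akcar by (subst et) (simp add: R.m_assoc)
          also have "\<dots> = t \<otimes>\<^bsub>R\<^esub> x \<otimes>\<^bsub>R\<^esub> a [^]\<^bsub>R\<^esub> k"
            using central_comm[OF akc, of "t \<otimes>\<^bsub>R\<^esub> x"] tc xc by simp
          finally have ex: "e \<otimes>\<^bsub>R\<^esub> x = t \<otimes>\<^bsub>R\<^esub> x \<otimes>\<^bsub>R\<^esub> a [^]\<^bsub>R\<^esub> k" .
          show ?thesis using ex tc xc akcar fc by (simp add: R.m_assoc)
        qed
        thus ?thesis using ak0 tc xc by simp
      qed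
      have r: "(\<one>\<^bsub>R\<^esub> \<ominus>\<^bsub>R\<^esub> e) \<otimes>\<^bsub>R\<^esub> x \<otimes>\<^bsub>R\<^esub> e = \<zero>\<^bsub>R\<^esub>"
      proof -
        have "(\<one>\<^bsub>R\<^esub> \<ominus>\<^bsub>R\<^esub> e) \<otimes>\<^bsub>R\<^esub> x \<otimes>\<^bsub>R\<^esub> e = ((\<one>\<^bsub>R\<^esub> \<ominus>\<^bsub>R\<^esub> e) \<otimes>\<^bsub>R\<^esub> a [^]\<^bsub>R\<^esub> k) \<otimes>\<^bsub>R\<^esub> (x \<otimes>\<^bsub>R\<^esub> t)"
        proof -
          have "x \<otimes>\<^bsub>R\<^esub> e = x \<otimes>\<^bsub>R\<^esub> a [^]\<^bsub>R\<^esub> k \<otimes>\<^bsub>R\<^esub> t"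
            using tc xc akcar by (subst et) (simp add: R.m_assoc)
          also have "\<dots> = a [^]\<^bsub>R\<^esub> k \<otimes>\<^bsub>R\<^esub> (x \<otimes>\<^bsub>R\<^esub> t)"
            using central_comm[OF akc, of x] tc xc akcar by (metis R.m_assoc)
          finally have xe: "x \<otimes>\<^bsub>R\<^esub> e = a [^]\<^bsub>R\<^esub> k \<otimes>\<^bsub>R\<^esub> (x \<otimes>\<^bsub>R\<^esub> t)" .
          show ?thesis using xe tc xc akcar fc ec by (simp add: R.m_assoc)
        qed
        thus ?thesis using ak0' tc xc by simp
      qed
      have "e \<otimes>\<^bsub>R\<^esub> x \<otimes>\<^bsub>R\<^esub> (\<one>\<^bsub>R\<^esub> \<ominus>\<^bsub>R\<^esub> e) = e \<otimes>\<^bsub>R\<^esub> x \<ominus>\<^bsub>R\<^esub> e \<otimes>\<^bsub>R\<^esub> x \<otimes>\<^bsub>R\<^esub> e"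
        using ec xc by (simp add: a_minus_def R.r_distr R.r_minus)
      hence 1: "e \<otimes>\<^bsub>R\<^esub> x = e \<otimes>\<^bsub>R\<^esub> x \<otimes>\<^bsub>R\<^esub> e" using l ec xc
        by (metis R.m_closed R.r_right_minus_eq)
      have "(\<one>\<^bsub>R\<^esub> \<ominus>\<^bsub>R\<^esub> e) \<otimes>\<^bsub>R\<^esub> x \<otimes>\<^bsub>R\<^esub> e = x \<otimes>\<^bsub>R\<^esub> e \<ominus>\<^bsub>R\<^esub> e \<otimes>\<^bsub>R\<^esub> x \<otimes>\<^bsub>R\<^esub> e"
        using ec xc by (simp add: a_minus_def R.l_distr R.l_minus)
      hence 2: "x \<otimes>\<^bsub>R\<^esub> e = e \<otimes>\<^bsub>R\<^esub> x \<otimes>\<^bsub>R\<^esub> e" using r ec xc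
        by (metis R.m_closed R.r_right_minus_eq)
      show "e \<otimes>\<^bsub>R\<^esub> x = x \<otimes>\<^bsub>R\<^esub> e" using 1 2 by simp
    qed
    define u where "u = a \<otimes>\<^bsub>R\<^esub> r \<otimes>\<^bsub>R\<^esub> e"
    have uc: "u \<in> carrier R" unfolding u_def using ac rc ec by simp
    have ue: "u \<otimes>\<^bsub>R\<^esub> e = u" unfolding u_def using ac rc ec ee by (simp add: R.m_assoc)
    have au: "a \<otimes>\<^bsub>R\<^esub> u = e" unfolding u_def using ac rc ec ee ear by (simp add: R.m_assoc[symmetric])
    have ua: "u \<otimes>\<^bsub>R\<^esub> a = e" using au acom[OF uc] by simp
    have uZ: "u \<in> center R" unfolding center_def
    proof (intro CollectI conjI ballI)
      show "u \<in> carrier R" by (rule uc)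
      fix x assume xc: "x \<in> carrier R"
      have "x \<otimes>\<^bsub>R\<^esub> u = x \<otimes>\<^bsub>R\<^esub> (e \<otimes>\<^bsub>R\<^esub> u)"
        using ue central_comm[OF eZ uc] by simp
      also have "\<dots> = e \<otimes>\<^bsub>R\<^esub> x \<otimes>\<^bsub>R\<^esub> u"
        using central_comm[OF eZ xc] xc ec uc by (simp add: R.m_assoc[symmetric])
      also have "\<dots> = (u \<otimes>\<^bsub>R\<^esub> a) \<otimes>\<^bsub>R\<^esub> x \<otimes>\<^bsub>R\<^esub> u"
        by (simp add: ua)
      also have "\<dots> = u \<otimes>\<^bsub>R\<^esub> ((a \<otimes>\<^bsub>R\<^esub> x) \<otimes>\<^bsub>R\<^esub> u)"
        using uc ac xc by (simp add: R.m_assoc)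
      also have "\<dots> = u \<otimes>\<^bsub>R\<^esub> ((x \<otimes>\<^bsub>R\<^esub> a) \<otimes>\<^bsub>R\<^esub> u)"
        by (simp only: acom[OF xc])
      also have "\<dots> = u \<otimes>\<^bsub>R\<^esub> (x \<otimes>\<^bsub>R\<^esub> (a \<otimes>\<^bsub>R\<^esub> u))"
        using uc ac xc by (simp add: R.m_assoc)
      also have "\<dots> = u \<otimes>\<^bsub>R\<^esub> (x \<otimes>\<^bsub>R\<^esub> e)"
        by (simp only: au)
      also have "\<dots> = u \<otimes>\<^bsub>R\<^esub> (e \<otimes>\<^bsub>R\<^esub> x)"
        by (simp only: central_comm[OF eZ xc])
      also have "\<dots> = (u \<otimes>\<^bsub>R\<^esub> e) \<otimes>\<^bsub>R\<^esub> x"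
        using uc ec xc by (simp add: R.m_assoc)
      also have "\<dots> = u \<otimes>\<^bsub>R\<^esub> x"
        by (simp only: ue)
      finally show "u \<otimes>\<^bsub>R\<^esub> x = x \<otimes>\<^bsub>R\<^esub> u" by simp
    qed
    define s where "s = u \<otimes>\<^bsub>R\<^esub> u"
    have sZ: "s \<in> center R" unfolding s_def using subringE(6)[OF R.center_subring] uZ by blast
    have ase: "e = a \<otimes>\<^bsub>R\<^esub> s \<otimes>\<^bsub>R\<^esub> a"
    proof -
      have "a \<otimes>\<^bsub>R\<^esub> s \<otimes>\<^bsub>R\<^esub> a = (a \<otimes>\<^bsub>R\<^esub> u) \<otimes>\<^bsub>R\<^esub> (u \<otimes>\<^bsub>R\<^esub> a)"
        unfolding s_def using ac uc by (simp add: R.m_assoc)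
      thus ?thesis using au ua ee by simp
    qed
    show "\<exists>e. e \<in> Idems (center_ring R) \<and>
          (\<exists>r\<in>carrier (center_ring R). e = a \<otimes>\<^bsub>center_ring R\<^esub> r \<otimes>\<^bsub>center_ring R\<^esub> a) \<and>
          a \<otimes>\<^bsub>center_ring R\<^esub> (\<one>\<^bsub>center_ring R\<^esub> \<ominus>\<^bsub>center_ring R\<^esub> e) \<in> Nilps (center_ring R)"
    proof (intro exI conjI)
      show "e \<in> Idems (center_ring R)" unfolding Idems_def using eZ cC mC ee by simp
      show "\<exists>r\<in>carrier (center_ring R). e = a \<otimes>\<^bsub>center_ring R\<^esub> r \<otimes>\<^bsub>center_ring R\<^esub> a"
        using sZ cC mC ase by auto
      have "a \<otimes>\<^bsub>R\<^esub> (\<one>\<^bsub>R\<^esub> \<ominus>\<^bsub>R\<^esub> e) \<in> center R"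
        using subringE(6,3,7,5)[OF R.center_subring] aZ eZ by (simp add: a_minus_def)
      show "a \<otimes>\<^bsub>center_ring R\<^esub> (\<one>\<^bsub>center_ring R\<^esub> \<ominus>\<^bsub>center_ring R\<^esub> e) \<in> Nilps (center_ring R)"
      proof -
        have kk: "(a \<otimes>\<^bsub>R\<^esub> (\<one>\<^bsub>R\<^esub> \<ominus>\<^bsub>R\<^esub> e)) [^]\<^bsub>center_ring R\<^esub> k = \<zero>\<^bsub>R\<^esub>"
          using k by (simp only: pow_center_ring)
        show ?thesis unfolding Nilps_def using minusC[OF eZ] mC oC zC cC kk \<open>a \<otimes>\<^bsub>R\<^esub> (\<one>\<^bsub>R\<^esub> \<ominus>\<^bsub>R\<^esub> e) \<in> center R\<close> by auto
      qed
    qed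
  qed
  show ?thesis using rC D assms(2) oC zC by simp
qed

end
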